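(* Let $P,Q,R$ be plane posets. (1) $P\triangleleft Q\leq R$ if and only if there exists a biideal $I_0$ of $R$ such that $P\leq R\setminus I_0$ and $Q\leq I_0$. Moreover, if this holds, $I_0$ is unique and $I_0=\theta_{PQ,R}(Q)$. (2) $PQ\leq R$ if and only if there exists a plane subposet $I_0$ of $R$ such that $R=(R\setminus I_0)I_0$, $P\leq R\setminus I_0$ and $Q\leq I_0$. Moreover, if this holds, $I_0$ is unique and $I_0=\theta_{P\triangleleft Q,R}(Q)$. (3) $\iota(PQ)\leq R$ if and only if there exists a biideal $I_0$ of $R$ such that $\iota(R\setminus I_0)\leq P$ and $\iota(I_0)\leq Q$. Moreover, if this holds, $I_0$ is unique and $I_0=\theta_{PQ,R}(Q)$. (4) $\iota(P\triangleleft Q)\leq R$ if and only if there exists a plane subposet $I_0$ of $R$ such that $R=(R\setminus I_0)I_0$, $\iota(R\setminus I_0)\leq P$ and $\iota(I_0)\leq Q$. Moreover, if this holds, $I_0$ is unique and $I_0=\theta_{P\triangleleft Q,R}(Q)$.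
   Context: A plane poset is a finite set with two partial orders $\leq_h,\leq_r$ such that two distinct elements are $\leq_h$-comparable iff they are not $\leq_r$-comparable, considered up to isomorphism; a subset with the restricted orders is a plane subposet. On a plane poset, $x\leq y$ iff ($x\leq_h y$ or $x\leq_r y$) is a total order (known fact). For plane posets $P,Q$ of the same cardinality, $\theta_{P,Q}$ is the increasing bijection $P\to Q$ for these total orders, and $P\leq Q$ means: for all $x,y\in P$, $\theta_{P,Q}(x)\leq_h\theta_{P,Q}(y)$ in $Q$ implies $x\leq_h y$ in $P$ (the relation $\leq$ is only defined between plane posets of the same cardinality). A biideal of $P$ is a subset $I$ such that $x\in I$ and ($x\leq_h y$ or $x\leq_r y$) imply $y\in I$. $PQ$ is the plane poset on $P\sqcup Q$ in which $P,Q$ are plane subposets, no element of $P$ is $\leq_h$-comparable to an element of $Q$, and $x<_r y$ for all $x\in P,y\in Q$; $P\triangleleft Q$ is defined likewise with $x<_h y$ for all $x\in P,y\in Q$ and no $\leq_r$-comparabilities between $P$ and $Q$. For a plane subposet $I_0$ of $R$, $R=(R\setminus I_0)I_0$ means $R$ equals the product $PQ$-type construction of its plane subposets $R\setminus I_0$ and $I_0$. $\iota(P)=(P,\leq_r,\leq_h)$ exchanges the two orders. *)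

theory Defs
  imports Main
begin

type_synonym 'a pp = "'a set \<times> ('a \<Rightarrow> 'a \<Rightarrow> bool) \<times> ('a \<Rightarrow> 'a \<Rightarrow> bool)"

definition pcar :: "'a pp \<Rightarrow> 'a set" where "pcar P = fst P"
definition hle :: "'a pp \<Rightarrow> 'a \<Rightarrow> 'a \<Rightarrow> bool" where "hle P = fst (snd P)"
definition rle :: "'a pp \<Rightarrow> 'a \<Rightarrow> 'a \<Rightarrow> bool" where "rle P = snd (snd P)"

definition plane_poset :: "'a pp \<Rightarrow> bool" where
  "plane_poset P \<longleftrightarrow>
     finite (pcar P)
   \<and> (\<forall>x y. hle P x y \<longrightarrow> x \<in> pcar P \<and> y \<in> pcar P)
   \<and> (\<forall>x y. rle P x y \<longrightarrow> x \<in> pcar P \<and> y \<in> pcar P)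
   \<and> (\<forall>x\<in>pcar P. hle P x x \<and> rle P x x)
   \<and> (\<forall>x y. hle P x y \<and> hle P y x \<longrightarrow> x = y)
   \<and> (\<forall>x y. rle P x y \<and> rle P y x \<longrightarrow> x = y)
   \<and> (\<forall>x y z. hle P x y \<and> hle P y z \<longrightarrow> hle P x z)
   \<and> (\<forall>x y z. rle P x y \<and> rle P y z \<longrightarrow> rle P x z)
   \<and> (\<forall>x\<in>pcar P. \<forall>y\<in>pcar P. x \<noteq> y \<longrightarrow>
        ((hle P x y \<or> hle P y x) \<longleftrightarrow> \<not> (rle P x y \<or> rle P y x)))"

definition tle :: "'a pp \<Rightarrow> 'a \<Rightarrow> 'a \<Rightarrow> bool" where
  "tle P x y \<longleftrightarrow> hle P x y \<or> rle P x y"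

definition theta :: "'a pp \<Rightarrow> 'b pp \<Rightarrow> 'a \<Rightarrow> 'b" where
  "theta P Q = (THE f. bij_betw f (pcar P) (pcar Q)
      \<and> (\<forall>x\<in>pcar P. \<forall>y\<in>pcar P. tle P x y \<longrightarrow> tle Q (f x) (f y))
      \<and> (\<forall>x. x \<notin> pcar P \<longrightarrow> f x = undefined))"

definition ple :: "'a pp \<Rightarrow> 'b pp \<Rightarrow> bool" where
  "ple P Q \<longleftrightarrow> card (pcar P) = card (pcar Q)
     \<and> (\<forall>x\<in>pcar P. \<forall>y\<in>pcar P. hle Q (theta P Q x) (theta P Q y) \<longrightarrow> hle P x y)"

definition biideal :: "'a pp \<Rightarrow> 'a set \<Rightarrow> bool" where
  "biideal P I \<longleftrightarrow> I \<subseteq> pcar P \<and>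
     (\<forall>x\<in>I. \<forall>y. (hle P x y \<or> rle P x y) \<longrightarrow> y \<in> I)"

definition psub :: "'a pp \<Rightarrow> 'a set \<Rightarrow> 'a pp" where
  "psub P A = (A, \<lambda>x y. x \<in> A \<and> y \<in> A \<and> hle P x y, \<lambda>x y. x \<in> A \<and> y \<in> A \<and> rle P x y)"

definition pprod :: "'a pp \<Rightarrow> 'b pp \<Rightarrow> ('a + 'b) pp" where
  "pprod P Q = (Inl ` pcar P \<union> Inr ` pcar Q,
     \<lambda>u v. (case (u, v) of (Inl a, Inl b) \<Rightarrow> hle P a b | (Inr a, Inr b) \<Rightarrow> hle Q a b | _ \<Rightarrow> False),
     \<lambda>u v. (case (u, v) of (Inl a, Inl b) \<Rightarrow> rle P a b | (Inr a, Inr b) \<Rightarrow> rle Q a b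
              | (Inl a, Inr b) \<Rightarrow> a \<in> pcar P \<and> b \<in> pcar Q | _ \<Rightarrow> False))"

definition ptri :: "'a pp \<Rightarrow> 'b pp \<Rightarrow> ('a + 'b) pp" where
  "ptri P Q = (Inl ` pcar P \<union> Inr ` pcar Q,
     \<lambda>u v. (case (u, v) of (Inl a, Inl b) \<Rightarrow> hle P a b | (Inr a, Inr b) \<Rightarrow> hle Q a b
              | (Inl a, Inr b) \<Rightarrow> a \<in> pcar P \<and> b \<in> pcar Q | _ \<Rightarrow> False),
     \<lambda>u v. (case (u, v) of (Inl a, Inl b) \<Rightarrow> rle P a b | (Inr a, Inr b) \<Rightarrow> rle Q a b | _ \<Rightarrow> False))"

definition iota :: "'a pp \<Rightarrow> 'a pp" where
  "iota P = (pcar P, rle P, hle P)"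

definition pp_iso :: "('a \<Rightarrow> 'b) \<Rightarrow> 'a pp \<Rightarrow> 'b pp \<Rightarrow> bool" where
  "pp_iso f P Q \<longleftrightarrow> bij_betw f (pcar P) (pcar Q)
     \<and> (\<forall>x\<in>pcar P. \<forall>y\<in>pcar P. (hle P x y \<longleftrightarrow> hle Q (f x) (f y)) \<and> (rle P x y \<longleftrightarrow> rle Q (f x) (f y)))"

text \<open>R = (R \<setminus> I0) I0 : R coincides (via the identity on elements) with the product
  of its plane subposets R \<setminus> I0 and I0.\<close>
definition splits :: "'a pp \<Rightarrow> 'a set \<Rightarrow> bool" where
  "splits R I0 \<longleftrightarrow> pp_iso (case_sum id id) (pprod (psub R (pcar R - I0)) (psub R I0)) R"

end

theory Submission
  imports Defs
begin

definition tot :: "'a pp \<Rightarrow> bool" where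
  "tot P \<longleftrightarrow> finite (pcar P)
   \<and> (\<forall>x y. tle P x y \<longrightarrow> x \<in> pcar P \<and> y \<in> pcar P)
   \<and> (\<forall>x\<in>pcar P. tle P x x)
   \<and> (\<forall>x y. tle P x y \<and> tle P y x \<longrightarrow> x = y)
   \<and> (\<forall>x y z. tle P x y \<and> tle P y z \<longrightarrow> tle P x z)
   \<and> (\<forall>x\<in>pcar P. \<forall>y\<in>pcar P. tle P x y \<or> tle P y x)"

lemma tot_fin: "tot P \<Longrightarrow> finite (pcar P)" unfolding tot_def by metis
lemma tot_mem1: "tot P \<Longrightarrow> tle P x y \<Longrightarrow> x \<in> pcar P" unfolding tot_def by metis
lemma tot_mem2: "tot P \<Longrightarrow> tle P x y \<Longrightarrow> y \<in> pcar P" unfolding tot_def by metis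
lemma tot_refl: "tot P \<Longrightarrow> x \<in> pcar P \<Longrightarrow> tle P x x" unfolding tot_def by metis
lemma tot_antisym: "tot P \<Longrightarrow> tle P x y \<Longrightarrow> tle P y x \<Longrightarrow> x = y" unfolding tot_def by metis
lemma tot_trans: "tot P \<Longrightarrow> tle P x y \<Longrightarrow> tle P y z \<Longrightarrow> tle P x z" unfolding tot_def by metis
lemma tot_total: "tot P \<Longrightarrow> x \<in> pcar P \<Longrightarrow> y \<in> pcar P \<Longrightarrow> tle P x y \<or> tle P y x" unfolding tot_def by metis


definition rk :: "'a pp \<Rightarrow> 'a \<Rightarrow> nat" where
  "rk P x = card {y \<in> pcar P. tle P y x \<and> y \<noteq> x}"

lemma rk_le_iff:
  assumes "tot P" "x \<in> pcar P" "y \<in> pcar P"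
  shows "tle P x y \<longleftrightarrow> rk P x \<le> rk P y"
proof
  assume a: "tle P x y"
  have "{z \<in> pcar P. tle P z x \<and> z \<noteq> x} \<subseteq> {z \<in> pcar P. tle P z y \<and> z \<noteq> y}"
  proof
    fix z assume "z \<in> {z \<in> pcar P. tle P z x \<and> z \<noteq> x}"
    then have z: "z \<in> pcar P" "tle P z x" "z \<noteq> x" by auto
    have "tle P z y" using tot_trans[OF assms(1) z(2) a] .
    moreover have "z \<noteq> y" using tot_antisym[OF assms(1) z(2)] a z(3) by blast
    ultimately show "z \<in> {z \<in> pcar P. tle P z y \<and> z \<noteq> y}" using z by auto
  qed
  then show "rk P x \<le> rk P y" unfolding rk_def using tot_fin[OF assms(1)]
    by (intro card_mono) auto
next
  assume h: "rk P x \<le> rk P y"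
  show "tle P x y"
  proof (rule ccontr)
    assume n: "\<not> tle P x y"
    then have yx: "tle P y x" "y \<noteq> x" using assms tot_total tot_refl by metis+
    have "{z \<in> pcar P. tle P z y \<and> z \<noteq> y} \<subset> {z \<in> pcar P. tle P z x \<and> z \<noteq> x}"
    proof
      show "{z \<in> pcar P. tle P z y \<and> z \<noteq> y} \<subseteq> {z \<in> pcar P. tle P z x \<and> z \<noteq> x}"
      proof
        fix z assume "z \<in> {z \<in> pcar P. tle P z y \<and> z \<noteq> y}"
        then have z: "z \<in> pcar P" "tle P z y" "z \<noteq> y" by auto
        have "tle P z x" using tot_trans[OF assms(1) z(2) yx(1)] .
        moreover have "z \<noteq> x" using z(2) n by blast
        ultimately show "z \<in> {z \<in> pcar P. tle P z x \<and> z \<noteq> x}" using z by auto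
      qed
      show "{z \<in> pcar P. tle P z y \<and> z \<noteq> y} \<noteq> {z \<in> pcar P. tle P z x \<and> z \<noteq> x}"
        using assms(3) yx by blast
    qed
    then have "rk P y < rk P x" unfolding rk_def using tot_fin[OF assms(1)]
      by (intro psubset_card_mono) auto
    with h show False by simp
  qed
qed

lemma rk_inj: assumes "tot P" shows "inj_on (rk P) (pcar P)"
proof (rule inj_onI)
  fix x y assume "x \<in> pcar P" "y \<in> pcar P" "rk P x = rk P y"
  then have "tle P x y" "tle P y x" using rk_le_iff[OF assms] by auto
  then show "x = y" using assms tot_antisym by metis
qed

lemma rk_less: assumes "tot P" "x \<in> pcar P" shows "rk P x < card (pcar P)"
proof -
  have f: "finite (pcar P)" using assms tot_fin by blast
  have "{y \<in> pcar P. tle P y x \<and> y \<noteq> x} \<subset> pcar P" using assms by blast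
  then show ?thesis unfolding rk_def using f by (intro psubset_card_mono) auto
qed

lemma rk_bij: assumes "tot P" shows "bij_betw (rk P) (pcar P) {..<card (pcar P)}"
proof -
  have f: "finite (pcar P)" using assms tot_fin by blast
  have sub: "rk P ` pcar P \<subseteq> {..<card (pcar P)}" using rk_less[OF assms] by auto
  have "card (rk P ` pcar P) = card {..<card (pcar P)}"
    using card_image[OF rk_inj[OF assms]] by simp
  then have "rk P ` pcar P = {..<card (pcar P)}" using sub by (intro card_subset_eq) auto
  then show ?thesis using rk_inj[OF assms] unfolding bij_betw_def by blast
qed

lemma pl_fin: "plane_poset P \<Longrightarrow> finite (pcar P)" unfolding plane_poset_def by metis
lemma pl_hmem: "plane_poset P \<Longrightarrow> hle P x y \<Longrightarrow> x \<in> pcar P \<and> y \<in> pcar P" unfolding plane_poset_def by metis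
lemma pl_rmem: "plane_poset P \<Longrightarrow> rle P x y \<Longrightarrow> x \<in> pcar P \<and> y \<in> pcar P" unfolding plane_poset_def by metis
lemma pl_hrefl: "plane_poset P \<Longrightarrow> x \<in> pcar P \<Longrightarrow> hle P x x" unfolding plane_poset_def by metis
lemma pl_rrefl: "plane_poset P \<Longrightarrow> x \<in> pcar P \<Longrightarrow> rle P x x" unfolding plane_poset_def by metis
lemma pl_hanti: "plane_poset P \<Longrightarrow> hle P x y \<Longrightarrow> hle P y x \<Longrightarrow> x = y" unfolding plane_poset_def by metis
lemma pl_ranti: "plane_poset P \<Longrightarrow> rle P x y \<Longrightarrow> rle P y x \<Longrightarrow> x = y" unfolding plane_poset_def by metis
lemma pl_htrans: "plane_poset P \<Longrightarrow> hle P x y \<Longrightarrow> hle P y z \<Longrightarrow> hle P x z" unfolding plane_poset_def by metis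
lemma pl_rtrans: "plane_poset P \<Longrightarrow> rle P x y \<Longrightarrow> rle P y z \<Longrightarrow> rle P x z" unfolding plane_poset_def by metis
lemma pl_xor: "plane_poset P \<Longrightarrow> x \<in> pcar P \<Longrightarrow> y \<in> pcar P \<Longrightarrow> x \<noteq> y \<Longrightarrow>
   ((hle P x y \<or> hle P y x) \<longleftrightarrow> \<not> (rle P x y \<or> rle P y x))" unfolding plane_poset_def by metis

lemma plane_tot: assumes pl: "plane_poset P" shows "tot P"
proof -
  have tr: "tle P x z" if a: "tle P x y" "tle P y z" for x y z
  proof -
    have hx: "x \<in> pcar P" "y \<in> pcar P" "z \<in> pcar P"
      using a pl_hmem[OF pl] pl_rmem[OF pl] unfolding tle_def by metis+
    show ?thesis
    proof (cases "x = y \<or> y = z \<or> x = z")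
      case True then show ?thesis using a pl_hrefl[OF pl] pl_rrefl[OF pl] hx unfolding tle_def by metis
    next
      case False
      then have c: "(hle P x z \<or> hle P z x) \<longleftrightarrow> \<not> (rle P x z \<or> rle P z x)"
        "(hle P x y \<or> hle P y x) \<longleftrightarrow> \<not> (rle P x y \<or> rle P y x)"
        "(hle P y z \<or> hle P z y) \<longleftrightarrow> \<not> (rle P y z \<or> rle P z y)"
        using hx pl_xor[OF pl] by metis+
      have ht: "\<And>a b c. hle P a b \<Longrightarrow> hle P b c \<Longrightarrow> hle P a c" using pl_htrans[OF pl] by blast
      have rt: "\<And>a b c. rle P a b \<Longrightarrow> rle P b c \<Longrightarrow> rle P a c" using pl_rtrans[OF pl] by blast
      have cxz: "hle P x z \<or> hle P z x \<or> rle P x z \<or> rle P z x" using c(1) by blast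
      consider "hle P x y" "hle P y z" | "rle P x y" "rle P y z" | "hle P x y" "rle P y z" | "rle P x y" "hle P y z"
        using a unfolding tle_def by blast
      then show ?thesis
      proof cases
        case 1 then show ?thesis using ht unfolding tle_def by blast
      next
        case 2 then show ?thesis using rt unfolding tle_def by blast
      next
        case 3
        have "\<not> hle P z x"
        proof
          assume "hle P z x" then have "hle P z y" using ht 3 by blast
          then show False using c(3) 3 by blast
        qed
        moreover have "\<not> rle P z x"
        proof
          assume "rle P z x" then have "rle P y x" using rt 3 by blast
          then show False using c(2) 3 by blast
        qed
        ultimately show ?thesis using cxz unfolding tle_def by blast
      next
        case 4
        have "\<not> hle P z x"
        proof
          assume "hle P z x" then have "hle P y x" using ht 4 by blast
          then show False using c(2) 4 by blast
        qed
        moreover have "\<not> rle P z x"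
        proof
          assume "rle P z x" then have "rle P z y" using rt 4 by blast
          then show False using c(3) 4 by blast
        qed
        ultimately show ?thesis using cxz unfolding tle_def by blast
      qed
    qed
  qed
  have an: "x = y" if "tle P x y" "tle P y x" for x y
  proof (rule ccontr)
    assume ne: "x \<noteq> y"
    have "x \<in> pcar P" "y \<in> pcar P" using that pl_hmem[OF pl] pl_rmem[OF pl] unfolding tle_def by metis+
    then show False using pl_xor[OF pl _ _ ne] ne that pl_hanti[OF pl] pl_ranti[OF pl] unfolding tle_def by blast
  qed
  have to: "tle P x y \<or> tle P y x" if "x \<in> pcar P" "y \<in> pcar P" for x y
    using that pl_xor[OF pl, of x y] pl_hrefl[OF pl, of x] unfolding tle_def by metis
  have mem: "x \<in> pcar P \<and> y \<in> pcar P" if "tle P x y" for x y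
    using that pl_hmem[OF pl] pl_rmem[OF pl] unfolding tle_def by metis
  show ?thesis
  proof (unfold tot_def, intro conjI allI impI ballI)
    show "finite (pcar P)" using pl_fin[OF pl] .
  next
    fix x y assume "tle P x y" then show "x \<in> pcar P" "y \<in> pcar P" using mem by blast+
  next
    fix x assume "x \<in> pcar P" then show "tle P x x" using pl_hrefl[OF pl] unfolding tle_def by blast
  next
    fix x y assume "tle P x y \<and> tle P y x" then show "x = y" using an by blast
  next
    fix x y z assume "tle P x y \<and> tle P y z" then show "tle P x z" using tr by blast
  next
    fix x y assume "x \<in> pcar P" "y \<in> pcar P" then show "tle P x y \<or> tle P y x" using to by blast
  qed
qed


definition isoT :: "'a pp \<Rightarrow> 'b pp \<Rightarrow> ('a \<Rightarrow> 'b) \<Rightarrow> bool" where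
  "isoT A B f \<longleftrightarrow> bij_betw f (pcar A) (pcar B) \<and> (\<forall>x\<in>pcar A. \<forall>y\<in>pcar A. tle A x y \<longrightarrow> tle B (f x) (f y))"

lemma isoT_refl:
  assumes "tot A" "tot B" "isoT A B f" "x \<in> pcar A" "y \<in> pcar A" "tle B (f x) (f y)"
  shows "tle A x y"
proof (rule ccontr)
  assume n: "\<not> tle A x y"
  then have "tle A y x" "x \<noteq> y" using tot_total[OF assms(1) assms(4,5)] tot_refl[OF assms(1) assms(4)] by auto
  then have "tle B (f y) (f x)" "f x \<noteq> f y" using assms(3,4,5) unfolding isoT_def bij_betw_def inj_on_def by auto
  then show False using tot_antisym[OF assms(2)] assms(6) by metis
qed

lemma isoT_rk:
  assumes tA: "tot A" and tB: "tot B" and i: "isoT A B f" and x: "x \<in> pcar A"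
  shows "rk B (f x) = rk A x"
proof -
  have bij: "bij_betw f (pcar A) (pcar B)" using i unfolding isoT_def by blast
  have inj: "inj_on f (pcar A)" using bij bij_betw_def by blast
  have "{z \<in> pcar B. tle B z (f x) \<and> z \<noteq> f x} = f ` {y \<in> pcar A. tle A y x \<and> y \<noteq> x}"
  proof
    show "{z \<in> pcar B. tle B z (f x) \<and> z \<noteq> f x} \<subseteq> f ` {y \<in> pcar A. tle A y x \<and> y \<noteq> x}"
    proof
      fix z assume "z \<in> {z \<in> pcar B. tle B z (f x) \<and> z \<noteq> f x}"
      then have z: "z \<in> pcar B" "tle B z (f x)" "z \<noteq> f x" by auto
      obtain y where y: "y \<in> pcar A" "z = f y" using z(1) bij unfolding bij_betw_def by blast
      have "tle A y x" using isoT_refl[OF tA tB i y(1) x] z y by simp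
      moreover have "y \<noteq> x" using z y by blast
      ultimately show "z \<in> f ` {y \<in> pcar A. tle A y x \<and> y \<noteq> x}" using y by blast
    qed
    show "f ` {y \<in> pcar A. tle A y x \<and> y \<noteq> x} \<subseteq> {z \<in> pcar B. tle B z (f x) \<and> z \<noteq> f x}"
    proof
      fix z assume "z \<in> f ` {y \<in> pcar A. tle A y x \<and> y \<noteq> x}"
      then obtain y where y: "y \<in> pcar A" "tle A y x" "y \<noteq> x" "z = f y" by blast
      have "tle B z (f x)" using i y x unfolding isoT_def by blast
      moreover have "z \<noteq> f x" using inj y x unfolding inj_on_def by blast
      moreover have "z \<in> pcar B" using bij y unfolding bij_betw_def by blast
      ultimately show "z \<in> {z \<in> pcar B. tle B z (f x) \<and> z \<noteq> f x}" by blast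
    qed
  qed
  then have "rk B (f x) = card (f ` {y \<in> pcar A. tle A y x \<and> y \<noteq> x})" unfolding rk_def by simp
  also have "\<dots> = rk A x" unfolding rk_def
    by (rule card_image) (rule inj_on_subset[OF inj], blast)
  finally show ?thesis .
qed

lemma isoT_unique:
  assumes "tot A" "tot B" "isoT A B f" "isoT A B g" "x \<in> pcar A"
  shows "f x = g x"
proof -
  have "f x \<in> pcar B" "g x \<in> pcar B" using assms(3,4,5) unfolding isoT_def bij_betw_def by auto
  moreover have "rk B (f x) = rk B (g x)" using isoT_rk[OF assms(1,2,3,5)] isoT_rk[OF assms(1,2,4,5)] by simp
  ultimately show ?thesis using rk_inj[OF assms(2)] unfolding inj_on_def by blast
qed

lemma isoT_exists:
  assumes tA: "tot A" and tB: "tot B" and c: "card (pcar A) = card (pcar B)"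
  shows "\<exists>f. isoT A B f"
proof -
  let ?g = "the_inv_into (pcar B) (rk B)"
  have bA: "bij_betw (rk A) (pcar A) {..<card (pcar B)}" using rk_bij[OF tA] c by simp
  have bB: "bij_betw ?g {..<card (pcar B)} (pcar B)" using bij_betw_the_inv_into[OF rk_bij[OF tB]] .
  have b: "bij_betw (?g \<circ> rk A) (pcar A) (pcar B)" using bij_betw_trans[OF bA bB] .
  have rkg: "rk B (?g (rk A x)) = rk A x" if "x \<in> pcar A" for x
    using f_the_inv_into_f_bij_betw[OF rk_bij[OF tB]] bA that unfolding bij_betw_def by blast
  have "isoT A B (?g \<circ> rk A)"
    unfolding isoT_def
  proof (intro conjI b ballI impI)
    fix x y assume xy: "x \<in> pcar A" "y \<in> pcar A" "tle A x y"
    have "rk A x \<le> rk A y" using rk_le_iff[OF tA xy(1,2)] xy(3) by simp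
    then have "rk B ((?g \<circ> rk A) x) \<le> rk B ((?g \<circ> rk A) y)" using rkg xy by simp
    moreover have "(?g \<circ> rk A) x \<in> pcar B" "(?g \<circ> rk A) y \<in> pcar B" using b xy unfolding bij_betw_def by auto
    ultimately show "tle B ((?g \<circ> rk A) x) ((?g \<circ> rk A) y)" using rk_le_iff[OF tB] by blast
  qed
  then show ?thesis by blast
qed

lemma theta_iso:
  assumes tA: "tot A" and tB: "tot B" and c: "card (pcar A) = card (pcar B)"
  shows "isoT A B (theta A B)"
proof -
  obtain f where f: "isoT A B f" using isoT_exists[OF assms] by blast
  define f' where "f' = (\<lambda>x. if x \<in> pcar A then f x else undefined)"
  have fi: "isoT A B f'"
    using f unfolding isoT_def f'_def bij_betw_def inj_on_def by (auto simp: image_def)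
  let ?P = "\<lambda>f. bij_betw f (pcar A) (pcar B)
      \<and> (\<forall>x\<in>pcar A. \<forall>y\<in>pcar A. tle A x y \<longrightarrow> tle B (f x) (f y))
      \<and> (\<forall>x. x \<notin> pcar A \<longrightarrow> f x = undefined)"
  have "?P f'" using fi unfolding isoT_def f'_def by auto
  moreover have "g = f'" if "?P g" for g
  proof
    fix x show "g x = f' x"
    proof (cases "x \<in> pcar A")
      case True
      have "isoT A B g" using that unfolding isoT_def by blast
      then show ?thesis using isoT_unique[OF tA tB _ fi True] by blast
    next
      case False then show ?thesis using that unfolding f'_def by simp
    qed
  qed
  ultimately have "?P (theta A B)" unfolding theta_def by (rule theI)
  then show ?thesis unfolding isoT_def by blast
qed

lemma theta_eqI:
  assumes "tot A" "tot B" "isoT A B g" "x \<in> pcar A"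
  shows "theta A B x = g x"
proof -
  have "card (pcar A) = card (pcar B)" using assms(3) unfolding isoT_def by (metis bij_betw_same_card)
  then show ?thesis using isoT_unique[OF assms(1,2) theta_iso[OF assms(1,2)] assms(3,4)] by blast
qed

lemma pcar_ptri[simp]: "pcar (ptri P Q) = Inl ` pcar P \<union> Inr ` pcar Q" by (simp add: ptri_def pcar_def)
lemma pcar_pprod[simp]: "pcar (pprod P Q) = Inl ` pcar P \<union> Inr ` pcar Q" by (simp add: pprod_def pcar_def)
lemma hle_ptri[simp]:
  "hle (ptri P Q) (Inl a) (Inl b) = hle P a b"
  "hle (ptri P Q) (Inr c) (Inr d) = hle Q c d"
  "hle (ptri P Q) (Inl a) (Inr d) = (a \<in> pcar P \<and> d \<in> pcar Q)"
  "hle (ptri P Q) (Inr c) (Inl b) = False"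
  by (simp_all add: ptri_def hle_def pcar_def)
lemma rle_ptri[simp]:
  "rle (ptri P Q) (Inl a) (Inl b) = rle P a b"
  "rle (ptri P Q) (Inr c) (Inr d) = rle Q c d"
  "rle (ptri P Q) (Inl a) (Inr d) = False"
  "rle (ptri P Q) (Inr c) (Inl b) = False"
  by (simp_all add: ptri_def rle_def pcar_def)
lemma hle_pprod[simp]:
  "hle (pprod P Q) (Inl a) (Inl b) = hle P a b"
  "hle (pprod P Q) (Inr c) (Inr d) = hle Q c d"
  "hle (pprod P Q) (Inl a) (Inr d) = False"
  "hle (pprod P Q) (Inr c) (Inl b) = False"
  by (simp_all add: pprod_def hle_def pcar_def)
lemma rle_pprod[simp]:
  "rle (pprod P Q) (Inl a) (Inl b) = rle P a b"
  "rle (pprod P Q) (Inr c) (Inr d) = rle Q c d"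
  "rle (pprod P Q) (Inl a) (Inr d) = (a \<in> pcar P \<and> d \<in> pcar Q)"
  "rle (pprod P Q) (Inr c) (Inl b) = False"
  by (simp_all add: pprod_def rle_def pcar_def)

lemma tle_ptri[simp]:
  "tle (ptri P Q) (Inl a) (Inl b) = tle P a b"
  "tle (ptri P Q) (Inr c) (Inr d) = tle Q c d"
  "tle (ptri P Q) (Inl a) (Inr d) = (a \<in> pcar P \<and> d \<in> pcar Q)"
  "tle (ptri P Q) (Inr c) (Inl b) = False"
  by (simp_all add: tle_def)

lemma tle_pprod_ptri: "tle (pprod P Q) = tle (ptri P Q)"
proof (intro ext)
  fix u v :: "'a + 'b"
  show "tle (pprod P Q) u v = tle (ptri P Q) u v"
    by (cases u; cases v) (simp_all add: tle_def)
qed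

lemma tot_cong: "pcar A = pcar B \<Longrightarrow> tle A = tle B \<Longrightarrow> tot A = tot B"
  unfolding tot_def by simp

lemma theta_cong1: "pcar A = pcar B \<Longrightarrow> tle A = tle B \<Longrightarrow> theta A C = theta B C"
  unfolding theta_def by simp
lemma theta_cong2: "pcar A = pcar B \<Longrightarrow> tle A = tle B \<Longrightarrow> theta C A = theta C B"
  unfolding theta_def by simp

lemma tot_ptri: assumes P: "tot P" and Q: "tot Q" shows "tot (ptri P Q)"
proof (unfold tot_def, intro conjI allI impI ballI)
  show "finite (pcar (ptri P Q))" using tot_fin[OF P] tot_fin[OF Q] by simp
next
  fix x y assume h: "tle (ptri P Q) x y"
  show "x \<in> pcar (ptri P Q)" "y \<in> pcar (ptri P Q)"
  proof -
    have "x \<in> pcar (ptri P Q) \<and> y \<in> pcar (ptri P Q)"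
    proof (cases x; cases y)
      fix a b assume "x = Inl a" "y = Inl b" then show ?thesis using h tot_mem1[OF P] tot_mem2[OF P] by simp
    next
      fix a b assume "x = Inl a" "y = Inr b" then show ?thesis using h by simp
    next
      fix a b assume "x = Inr a" "y = Inl b" then show ?thesis using h by simp
    next
      fix a b assume "x = Inr a" "y = Inr b" then show ?thesis using h tot_mem1[OF Q] tot_mem2[OF Q] by simp
    qed
    then show "x \<in> pcar (ptri P Q)" "y \<in> pcar (ptri P Q)" by blast+
  qed
next
  fix x assume "x \<in> pcar (ptri P Q)" then show "tle (ptri P Q) x x"
    using tot_refl[OF P] tot_refl[OF Q] by auto
next
  fix x y assume h: "tle (ptri P Q) x y \<and> tle (ptri P Q) y x" then show "x = y"
  proof (cases x; cases y)
    fix a b assume "x = Inl a" "y = Inl b" then show ?thesis using h tot_antisym[OF P] by simp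
  next
    fix a b assume "x = Inl a" "y = Inr b" then show ?thesis using h by simp
  next
    fix a b assume "x = Inr a" "y = Inl b" then show ?thesis using h by simp
  next
    fix a b assume "x = Inr a" "y = Inr b" then show ?thesis using h tot_antisym[OF Q] by simp
  qed
next
  fix x y z assume h: "tle (ptri P Q) x y \<and> tle (ptri P Q) y z"
  show "tle (ptri P Q) x z"
  proof (cases x)
    case (Inl a) note xa = this
    show ?thesis
    proof (cases z)
      case (Inl c)
      then obtain b where "y = Inl b" using h xa by (cases y) auto
      then show ?thesis using h xa Inl tot_trans[OF P] by auto
    next
      case (Inr c)
      have "a \<in> pcar P" using h xa by (cases y) (auto dest: tot_mem1[OF P])
      moreover have "c \<in> pcar Q" using h Inr by (cases y) (auto dest: tot_mem2[OF Q])
      ultimately show ?thesis using xa Inr by simp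
    qed
  next
    case (Inr a) note xa = this
    then obtain b where yb: "y = Inr b" using h by (cases y) auto
    then obtain c where "z = Inr c" using h by (cases z) auto
    then show ?thesis using h xa yb tot_trans[OF Q] by auto
  qed
next
  fix x y assume "x \<in> pcar (ptri P Q)" "y \<in> pcar (ptri P Q)"
  then show "tle (ptri P Q) x y \<or> tle (ptri P Q) y x"
    apply auto using tot_total[OF P] tot_total[OF Q] by blast+
qed

lemma tot_pprod: "tot P \<Longrightarrow> tot Q \<Longrightarrow> tot (pprod P Q)"
proof -
  assume "tot P" "tot Q"
  then have "tot (ptri P Q)" by (rule tot_ptri)
  moreover have "tot (pprod P Q) = tot (ptri P Q)" by (rule tot_cong) (simp_all add: tle_pprod_ptri)
  ultimately show ?thesis by simp
qed

lemma pcar_iota[simp]: "pcar (iota P) = pcar P" by (simp add: iota_def pcar_def)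
lemma hle_iota[simp]: "hle (iota P) = rle P" by (simp add: iota_def hle_def rle_def)
lemma rle_iota[simp]: "rle (iota P) = hle P" by (simp add: iota_def hle_def rle_def)
lemma tle_iota[simp]: "tle (iota P) = tle P" by (intro ext) (auto simp: tle_def)

lemma plane_iota: assumes pl: "plane_poset P" shows "plane_poset (iota P)"
proof (unfold plane_poset_def hle_iota rle_iota pcar_iota, intro conjI allI impI ballI)
  show "finite (pcar P)" using pl_fin[OF pl] .
next
  fix x y assume "rle P x y" then show "x \<in> pcar P" "y \<in> pcar P" using pl_rmem[OF pl] by blast+
next
  fix x y assume "hle P x y" then show "x \<in> pcar P" "y \<in> pcar P" using pl_hmem[OF pl] by blast+
next
  fix x assume "x \<in> pcar P" then show "rle P x x" "hle P x x" using pl_rrefl[OF pl] pl_hrefl[OF pl] by blast+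
next
  fix x y assume "rle P x y \<and> rle P y x" then show "x = y" using pl_ranti[OF pl] by blast
next
  fix x y assume "hle P x y \<and> hle P y x" then show "x = y" using pl_hanti[OF pl] by blast
next
  fix x y z assume "rle P x y \<and> rle P y z" then show "rle P x z" using pl_rtrans[OF pl] by blast
next
  fix x y z assume "hle P x y \<and> hle P y z" then show "hle P x z" using pl_htrans[OF pl] by blast
next
  fix x y assume "x \<in> pcar P" "y \<in> pcar P" "x \<noteq> y"
  then show "(rle P x y \<or> rle P y x) = (\<not> (hle P x y \<or> hle P y x))" using pl_xor[OF pl] by blast
qed


lemma pp_eqI: "pcar A = pcar B \<Longrightarrow> hle A = hle B \<Longrightarrow> rle A = rle B \<Longrightarrow> A = B"
  unfolding pcar_def hle_def rle_def by (simp add: prod_eq_iff)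

lemma iota_pprod: "iota (pprod P Q) = ptri (iota P) (iota Q)"
proof (rule pp_eqI)
  show "hle (iota (pprod P Q)) = hle (ptri (iota P) (iota Q))"
  proof (intro ext)
    fix u v :: "'a + 'b" show "hle (iota (pprod P Q)) u v = hle (ptri (iota P) (iota Q)) u v"
      by (cases u; cases v) simp_all
  qed
  show "rle (iota (pprod P Q)) = rle (ptri (iota P) (iota Q))"
  proof (intro ext)
    fix u v :: "'a + 'b" show "rle (iota (pprod P Q)) u v = rle (ptri (iota P) (iota Q)) u v"
      by (cases u; cases v) simp_all
  qed
qed simp

lemma iota_ptri: "iota (ptri P Q) = pprod (iota P) (iota Q)"
proof (rule pp_eqI)
  show "hle (iota (ptri P Q)) = hle (pprod (iota P) (iota Q))"
  proof (intro ext)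
    fix u v :: "'a + 'b" show "hle (iota (ptri P Q)) u v = hle (pprod (iota P) (iota Q)) u v"
      by (cases u; cases v) simp_all
  qed
  show "rle (iota (ptri P Q)) = rle (pprod (iota P) (iota Q))"
  proof (intro ext)
    fix u v :: "'a + 'b" show "rle (iota (ptri P Q)) u v = rle (pprod (iota P) (iota Q)) u v"
      by (cases u; cases v) simp_all
  qed
qed simp

lemma pcar_psub[simp]: "pcar (psub R A) = A" by (simp add: psub_def pcar_def)
lemma hle_psub[simp]: "hle (psub R A) x y = (x \<in> A \<and> y \<in> A \<and> hle R x y)" by (simp add: psub_def hle_def)
lemma rle_psub[simp]: "rle (psub R A) x y = (x \<in> A \<and> y \<in> A \<and> rle R x y)" by (simp add: psub_def rle_def)
lemma tle_psub[simp]: "tle (psub R A) x y = (x \<in> A \<and> y \<in> A \<and> tle R x y)" by (auto simp: tle_def)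

lemma plane_psub: assumes pl: "plane_poset R" and A: "A \<subseteq> pcar R" shows "plane_poset (psub R A)"
proof (unfold plane_poset_def, intro conjI allI impI ballI)
  show "finite (pcar (psub R A))" using pl_fin[OF pl] A finite_subset by simp
next
  fix x y assume "hle (psub R A) x y" then show "x \<in> pcar (psub R A)" "y \<in> pcar (psub R A)" by simp_all
next
  fix x y assume "rle (psub R A) x y" then show "x \<in> pcar (psub R A)" "y \<in> pcar (psub R A)" by simp_all
next
  fix x assume "x \<in> pcar (psub R A)" then show "hle (psub R A) x x" "rle (psub R A) x x"
    using pl_rrefl[OF pl] pl_hrefl[OF pl] A by auto
next
  fix x y assume "hle (psub R A) x y \<and> hle (psub R A) y x" then show "x = y" using pl_hanti[OF pl] by simp
next
  fix x y assume "rle (psub R A) x y \<and> rle (psub R A) y x" then show "x = y" using pl_ranti[OF pl] by simp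
next
  fix x y z assume "hle (psub R A) x y \<and> hle (psub R A) y z"
  then show "hle (psub R A) x z" using pl_htrans[OF pl] by auto
next
  fix x y z assume "rle (psub R A) x y \<and> rle (psub R A) y z"
  then show "rle (psub R A) x z" using pl_rtrans[OF pl] by auto
next
  fix x y assume xy: "x \<in> pcar (psub R A)" "y \<in> pcar (psub R A)" "x \<noteq> y"
  then have "x \<in> pcar R" "y \<in> pcar R" using A by auto
  then show "(hle (psub R A) x y \<or> hle (psub R A) y x) = (\<not> (rle (psub R A) x y \<or> rle (psub R A) y x))"
    using pl_xor[OF pl _ _ xy(3)] xy by simp
qed

lemma tot_psub: assumes t: "tot R" and A: "A \<subseteq> pcar R" shows "tot (psub R A)"
proof (unfold tot_def, intro conjI allI impI ballI)
  show "finite (pcar (psub R A))" using tot_fin[OF t] A finite_subset by simp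
next
  fix x y assume "tle (psub R A) x y" then show "x \<in> pcar (psub R A)" "y \<in> pcar (psub R A)" by simp_all
next
  fix x assume "x \<in> pcar (psub R A)" then show "tle (psub R A) x x" using tot_refl[OF t] A by auto
next
  fix x y assume "tle (psub R A) x y \<and> tle (psub R A) y x" then show "x = y" using tot_antisym[OF t] by simp
next
  fix x y z assume "tle (psub R A) x y \<and> tle (psub R A) y z"
  then show "tle (psub R A) x z" using tot_trans[OF t] by auto
next
  fix x y assume "x \<in> pcar (psub R A)" "y \<in> pcar (psub R A)"
  then show "tle (psub R A) x y \<or> tle (psub R A) y x" using tot_total[OF t] A by auto
qed

lemma theta_id: assumes "tot A" "x \<in> pcar A" shows "theta A A x = x"
proof -
  have "isoT A A id" unfolding isoT_def by simp
  then show ?thesis using theta_eqI[OF assms(1,1) _ assms(2)] by simp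
qed

lemma theta_inv:
  assumes tA: "tot A" and tB: "tot B" and c: "card (pcar A) = card (pcar B)" and x: "x \<in> pcar A"
  shows "theta B A (theta A B x) = x"
proof -
  have i1: "isoT A B (theta A B)" using theta_iso[OF tA tB c] .
  have i2: "isoT B A (theta B A)" using theta_iso[OF tB tA c[symmetric]] .
  have b1: "bij_betw (theta A B) (pcar A) (pcar B)" and m1: "\<And>x y. x \<in> pcar A \<Longrightarrow> y \<in> pcar A \<Longrightarrow> tle A x y \<Longrightarrow> tle B (theta A B x) (theta A B y)"
    using i1 unfolding isoT_def by blast+
  have b2: "bij_betw (theta B A) (pcar B) (pcar A)" and m2: "\<And>x y. x \<in> pcar B \<Longrightarrow> y \<in> pcar B \<Longrightarrow> tle B x y \<Longrightarrow> tle A (theta B A x) (theta B A y)"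
    using i2 unfolding isoT_def by blast+
  have "isoT A A (theta B A \<circ> theta A B)"
    unfolding isoT_def
  proof (intro conjI ballI impI)
    show "bij_betw (theta B A \<circ> theta A B) (pcar A) (pcar A)" using bij_betw_trans[OF b1 b2] .
    fix x y assume "x \<in> pcar A" "y \<in> pcar A" "tle A x y"
    moreover have "theta A B x \<in> pcar B" "theta A B y \<in> pcar B" using b1 calculation(1,2) bij_betwE by blast+
    ultimately show "tle A ((theta B A \<circ> theta A B) x) ((theta B A \<circ> theta A B) y)" using m1 m2 by simp
  qed
  then have "theta A A x = (theta B A \<circ> theta A B) x" using theta_eqI[OF tA tA _ x] by blast
  then show ?thesis using theta_id[OF tA x] by simp
qed

lemma iota_swap:
  assumes pA: "plane_poset A" and pB: "plane_poset B" and h: "ple (iota A) B"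
  shows "ple (iota B) A"
proof -
  have tA: "tot A" and tB: "tot B" using plane_tot pA pB by blast+
  have c: "card (pcar A) = card (pcar B)" using h unfolding ple_def by simp
  have th1: "theta (iota A) B = theta A B" by (rule theta_cong1) simp_all
  have th2: "theta (iota B) A = theta B A" by (rule theta_cong1) simp_all
  have i1: "isoT A B (theta A B)" using theta_iso[OF tA tB c] .
  have i2: "isoT B A (theta B A)" using theta_iso[OF tB tA c[symmetric]] .
  have H: "\<forall>x\<in>pcar A. \<forall>y\<in>pcar A. hle B (theta A B x) (theta A B y) \<longrightarrow> rle A x y"
    using h th1 unfolding ple_def by simp
  have "rle B u v" if u: "u \<in> pcar B" and v: "v \<in> pcar B" and hh: "hle A (theta B A u) (theta B A v)" for u v
  proof -
    let ?x = "theta B A u" and ?y = "theta B A v"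
    have xA: "?x \<in> pcar A" "?y \<in> pcar A" using i2 u v unfolding isoT_def bij_betw_def by auto
    have ux: "theta A B ?x = u" "theta A B ?y = v" using theta_inv[OF tB tA c[symmetric]] u v by auto
    show ?thesis
    proof (cases "u = v")
      case True then show ?thesis using pl_rrefl[OF pB u] by simp
    next
      case False
      then have ne: "?x \<noteq> ?y" using ux by auto
      have "\<not> rle A ?x ?y" using pl_xor[OF pA xA ne] hh by blast
      then have "\<not> hle B (theta A B ?x) (theta A B ?y)" using H xA by blast
      then have "\<not> hle B u v" using ux by simp
      moreover have "tle A ?x ?y" using hh unfolding tle_def by blast
      then have "tle B (theta A B ?x) (theta A B ?y)" using i1 xA unfolding isoT_def by blast
      then have "tle B u v" using ux by simp
      ultimately show ?thesis unfolding tle_def by blast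
    qed
  qed
  then show ?thesis unfolding ple_def using c th2 by simp
qed

lemma iota_swap_iff:
  assumes "plane_poset A" "plane_poset B"
  shows "ple (iota A) B \<longleftrightarrow> ple (iota B) A"
  using iota_swap[OF assms(1,2)] iota_swap[OF assms(2,1)] by (rule iffI)

lemma isoT_mono: "isoT A B f \<Longrightarrow> x \<in> pcar A \<Longrightarrow> y \<in> pcar A \<Longrightarrow> tle A x y \<Longrightarrow> tle B (f x) (f y)"
  unfolding isoT_def by blast
lemma isoT_bij: "isoT A B f \<Longrightarrow> bij_betw f (pcar A) (pcar B)"
  unfolding isoT_def by blast

lemma sub_ple:
  assumes tA: "tot A" and tX: "tot X" and tR: "tot R" and le: "ple X R"
    and inj: "inj_on e (pcar A)" and sub: "e ` pcar A \<subseteq> pcar X"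
    and mono: "\<And>a b. a \<in> pcar A \<Longrightarrow> b \<in> pcar A \<Longrightarrow> tle A a b \<Longrightarrow> tle X (e a) (e b)"
    and hr: "\<And>a b. a \<in> pcar A \<Longrightarrow> b \<in> pcar A \<Longrightarrow> hle X (e a) (e b) \<Longrightarrow> hle A a b"
  shows "ple A (psub R (theta X R ` e ` pcar A))"
proof -
  let ?t = "theta X R"
  let ?J = "?t ` e ` pcar A"
  have c: "card (pcar X) = card (pcar R)" using le unfolding ple_def by blast
  have iso: "isoT X R ?t" using theta_iso[OF tX tR c] .
  have bt: "bij_betw ?t (pcar X) (pcar R)" using isoT_bij[OF iso] .
  have injt: "inj_on ?t (pcar X)" using bij_betw_imp_inj_on[OF bt] .
  have J: "?J \<subseteq> pcar R" using bij_betw_imp_surj_on[OF bt] sub by blast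
  have tS: "tot (psub R ?J)" using tot_psub[OF tR J] .
  have inj2: "inj_on (?t \<circ> e) (pcar A)" using comp_inj_on[OF inj] inj_on_subset[OF injt sub] by blast
  have bg: "bij_betw (?t \<circ> e) (pcar A) (pcar (psub R ?J))"
    using inj2 unfolding bij_betw_def by (simp add: image_comp)
  have isg: "isoT A (psub R ?J) (?t \<circ> e)"
    unfolding isoT_def
  proof (intro conjI bg ballI impI)
    fix a b assume ab: "a \<in> pcar A" "b \<in> pcar A" "tle A a b"
    have "e a \<in> pcar X" "e b \<in> pcar X" using sub ab by blast+
    then have "tle R (?t (e a)) (?t (e b))" using isoT_mono[OF iso] mono[OF ab] by blast
    then show "tle (psub R ?J) ((?t \<circ> e) a) ((?t \<circ> e) b)" using ab by simp
  qed
  have th: "theta A (psub R ?J) a = ?t (e a)" if "a \<in> pcar A" for a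
    using theta_eqI[OF tA tS isg that] by simp
  have cA: "card (pcar A) = card (pcar (psub R ?J))" using bij_betw_same_card[OF bg] .
  show ?thesis unfolding ple_def
  proof (intro conjI cA ballI impI)
    fix a b assume ab: "a \<in> pcar A" "b \<in> pcar A"
      and h: "hle (psub R ?J) (theta A (psub R ?J) a) (theta A (psub R ?J) b)"
    have "hle R (?t (e a)) (?t (e b))" using h th ab by simp
    moreover have "e a \<in> pcar X" "e b \<in> pcar X" using sub ab by blast+
    ultimately have "hle X (e a) (e b)" using le unfolding ple_def by blast
    then show "hle A a b" using hr ab by blast
  qed
qed

lemma set_aux1: "A \<union> B = C \<Longrightarrow> A \<inter> B = {} \<Longrightarrow> C - B = A" by blast
lemma set_aux2: "A \<union> B = C \<Longrightarrow> B \<subseteq> C" by blast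

lemma fw:
  fixes P :: "'a pp" and Q :: "'b pp" and R :: "'c pp" and X :: "('a + 'b) pp"
  assumes tP: "tot P" and tQ: "tot Q" and tR: "tot R"
    and pX: "pcar X = Inl ` pcar P \<union> Inr ` pcar Q" and tX: "tle X = tle (ptri P Q)"
    and hl: "\<And>a b. hle X (Inl a) (Inl b) = hle P a b"
    and hr: "\<And>a b. hle X (Inr a) (Inr b) = hle Q a b"
    and le: "ple X R"
  shows "isoT X R (theta X R)"
    and "pcar R - theta X R ` Inr ` pcar Q = theta X R ` Inl ` pcar P"
    and "theta X R ` Inr ` pcar Q \<subseteq> pcar R"
    and "ple P (psub R (pcar R - theta X R ` Inr ` pcar Q))"
    and "ple Q (psub R (theta X R ` Inr ` pcar Q))"
proof -
  let ?t = "theta X R"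
  have "tot X = tot (ptri P Q)" by (rule tot_cong) (simp_all add: pX tX)
  then have totX: "tot X" using tot_ptri[OF tP tQ] by simp
  have c: "card (pcar X) = card (pcar R)" using le unfolding ple_def by blast
  show iso: "isoT X R ?t" using theta_iso[OF totX tR c] .
  have bt: "bij_betw ?t (pcar X) (pcar R)" using isoT_bij[OF iso] .
  have injt: "inj_on ?t (pcar X)" using bij_betw_imp_inj_on[OF bt] .
  have im: "?t ` pcar X = pcar R" using bij_betw_imp_surj_on[OF bt] .
  have disj: "?t ` Inl ` pcar P \<inter> ?t ` Inr ` pcar Q = {}"
  proof -
    have "?t (Inl a) \<noteq> ?t (Inr b)" if "a \<in> pcar P" "b \<in> pcar Q" for a b
    proof
      assume "?t (Inl a) = ?t (Inr b)"
      moreover have "Inl a \<in> pcar X" "Inr b \<in> pcar X" using that pX by blast+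
      ultimately have "(Inl a :: 'a + 'b) = Inr b" using injt unfolding inj_on_def by blast
      then show False by simp
    qed
    note ne = this
    show ?thesis
    proof (rule equals0I)
      fix z assume "z \<in> ?t ` Inl ` pcar P \<inter> ?t ` Inr ` pcar Q"
      then obtain a b where "a \<in> pcar P" "b \<in> pcar Q" "z = ?t (Inl a)" "z = ?t (Inr b)" by blast
      then show False using ne by metis
    qed
  qed
  have un: "?t ` Inl ` pcar P \<union> ?t ` Inr ` pcar Q = pcar R" using im pX by (simp add: image_Un)
  show eq: "pcar R - ?t ` Inr ` pcar Q = ?t ` Inl ` pcar P" using set_aux1[OF un disj] .
  show "?t ` Inr ` pcar Q \<subseteq> pcar R" using set_aux2[OF un] .
  have "ple P (psub R (?t ` Inl ` pcar P))"
  proof (rule sub_ple[OF tP totX tR le])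
    show "inj_on Inl (pcar P)" by simp
    show "Inl ` pcar P \<subseteq> pcar X" using pX by blast
    show "tle X (Inl a) (Inl b)" if "tle P a b" for a b using that tX by simp
    show "hle P a b" if "hle X (Inl a) (Inl b)" for a b using that hl by simp
  qed
  then show "ple P (psub R (pcar R - ?t ` Inr ` pcar Q))" using eq by simp
  show "ple Q (psub R (?t ` Inr ` pcar Q))"
  proof (rule sub_ple[OF tQ totX tR le])
    show "inj_on Inr (pcar Q)" by simp
    show "Inr ` pcar Q \<subseteq> pcar X" using pX by blast
    show "tle X (Inr a) (Inr b)" if "tle Q a b" for a b using that tX by simp
    show "hle Q a b" if "hle X (Inr a) (Inr b)" for a b using that hr by simp
  qed
qed

lemma glue:
  fixes P :: "'a pp" and Q :: "'b pp" and R :: "'c pp" and X :: "('a + 'b) pp"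
  assumes tP: "tot P" and tQ: "tot Q" and tR: "tot R" and I0: "I0 \<subseteq> pcar R"
    and l1: "ple P (psub R (pcar R - I0))" and l2: "ple Q (psub R I0)"
    and sep: "\<And>x y. x \<in> pcar R - I0 \<Longrightarrow> y \<in> I0 \<Longrightarrow> tle R x y"
    and pX: "pcar X = Inl ` pcar P \<union> Inr ` pcar Q" and tX: "tle X = tle (ptri P Q)"
  shows "isoT X R (case_sum (theta P (psub R (pcar R - I0))) (theta Q (psub R I0)))"
proof -
  let ?f = "theta P (psub R (pcar R - I0))" and ?h = "theta Q (psub R I0)"
  let ?g = "case_sum ?f ?h"
  have tS1: "tot (psub R (pcar R - I0))" using tot_psub[OF tR] by blast
  have tS2: "tot (psub R I0)" using tot_psub[OF tR I0] .
  have c1: "card (pcar P) = card (pcar (psub R (pcar R - I0)))" using l1 unfolding ple_def by blast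
  have c2: "card (pcar Q) = card (pcar (psub R I0))" using l2 unfolding ple_def by blast
  have i1: "isoT P (psub R (pcar R - I0)) ?f" using theta_iso[OF tP tS1 c1] .
  have i2: "isoT Q (psub R I0) ?h" using theta_iso[OF tQ tS2 c2] .
  have b1: "bij_betw ?f (pcar P) (pcar R - I0)" using isoT_bij[OF i1] by simp
  have b2: "bij_betw ?h (pcar Q) I0" using isoT_bij[OF i2] by simp
  have inj1: "inj_on ?f (pcar P)" using bij_betw_imp_inj_on[OF b1] .
  have inj2: "inj_on ?h (pcar Q)" using bij_betw_imp_inj_on[OF b2] .
  have im1: "?f ` pcar P = pcar R - I0" using bij_betw_imp_surj_on[OF b1] .
  have im2: "?h ` pcar Q = I0" using bij_betw_imp_surj_on[OF b2] .
  have img: "?g ` pcar X = pcar R"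
  proof -
    have "?g ` pcar X = ?g ` Inl ` pcar P \<union> ?g ` Inr ` pcar Q" using pX by (simp add: image_Un)
    also have "\<dots> = ?f ` pcar P \<union> ?h ` pcar Q" by (simp add: image_image)
    also have "\<dots> = pcar R" using im1 im2 I0 by blast
    finally show ?thesis .
  qed
  have injg: "inj_on ?g (pcar X)"
  proof (rule inj_onI)
    fix u v assume u: "u \<in> pcar X" and v: "v \<in> pcar X" and e: "?g u = ?g v"
    show "u = v"
    proof (cases u)
      case (Inl a) note ua = this
      then have a: "a \<in> pcar P" using u pX by auto
      show ?thesis
      proof (cases v)
        case (Inl b)
        then have "b \<in> pcar P" using v pX by auto
        then show ?thesis using inj1 a e ua Inl unfolding inj_on_def by simp
      next
        case (Inr b)
        then have "b \<in> pcar Q" using v pX by auto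
        then have "?h b \<in> I0" using im2 by blast
        moreover have "?f a \<in> pcar R - I0" using im1 a by blast
        ultimately show ?thesis using e ua Inr by simp
      qed
    next
      case (Inr a) note ua = this
      then have a: "a \<in> pcar Q" using u pX by auto
      show ?thesis
      proof (cases v)
        case (Inr b)
        then have "b \<in> pcar Q" using v pX by auto
        then show ?thesis using inj2 a e ua Inr unfolding inj_on_def by simp
      next
        case (Inl b)
        then have "b \<in> pcar P" using v pX by auto
        then have "?f b \<in> pcar R - I0" using im1 by blast
        moreover have "?h a \<in> I0" using im2 a by blast
        ultimately show ?thesis using e ua Inl by simp
      qed
    qed
  qed
  show ?thesis
    unfolding isoT_def
  proof (intro conjI ballI impI)
    show "bij_betw ?g (pcar X) (pcar R)" unfolding bij_betw_def using injg img by blast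
  next
    fix u v assume u: "u \<in> pcar X" and v: "v \<in> pcar X" and t: "tle X u v"
    show "tle R (?g u) (?g v)"
    proof (cases u)
      case (Inl a) note ua = this
      then have a: "a \<in> pcar P" using u pX by auto
      show ?thesis
      proof (cases v)
        case (Inl b)
        then have "b \<in> pcar P" using v pX by auto
        moreover have "tle P a b" using t tX ua Inl by simp
        ultimately have "tle (psub R (pcar R - I0)) (?f a) (?f b)" using isoT_mono[OF i1] a by blast
        then show ?thesis using ua Inl by simp
      next
        case (Inr b)
        then have "b \<in> pcar Q" using v pX by auto
        then have "?h b \<in> I0" using im2 by blast
        moreover have "?f a \<in> pcar R - I0" using im1 a by blast
        ultimately show ?thesis using sep ua Inr by simp
      qed
    next
      case (Inr a) note ua = this
      then have a: "a \<in> pcar Q" using u pX by auto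
      show ?thesis
      proof (cases v)
        case (Inr b)
        then have "b \<in> pcar Q" using v pX by auto
        moreover have "tle Q a b" using t tX ua Inr by simp
        ultimately have "tle (psub R I0) (?h a) (?h b)" using isoT_mono[OF i2] a by blast
        then show ?thesis using ua Inr by simp
      next
        case (Inl b)
        then show ?thesis using t tX ua by simp
      qed
    qed
  qed
qed

lemma splits_iff:
  assumes I0: "I0 \<subseteq> pcar R"
  shows "splits R I0 \<longleftrightarrow> (\<forall>x\<in>pcar R - I0. \<forall>y\<in>I0. rle R x y \<and> \<not> hle R x y \<and> \<not> hle R y x \<and> \<not> rle R y x)"
proof
  assume s: "splits R I0"
  let ?Y = "pprod (psub R (pcar R - I0)) (psub R I0)"
  have H: "\<forall>u\<in>pcar ?Y. \<forall>v\<in>pcar ?Y. (hle ?Y u v \<longleftrightarrow> hle R (case_sum id id u) (case_sum id id v))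
       \<and> (rle ?Y u v \<longleftrightarrow> rle R (case_sum id id u) (case_sum id id v))"
    using s unfolding splits_def pp_iso_def by blast
  show "\<forall>x\<in>pcar R - I0. \<forall>y\<in>I0. rle R x y \<and> \<not> hle R x y \<and> \<not> hle R y x \<and> \<not> rle R y x"
  proof (intro ballI)
    fix x y assume x: "x \<in> pcar R - I0" and y: "y \<in> I0"
    have u: "Inl x \<in> pcar ?Y" and v: "Inr y \<in> pcar ?Y" using x y by auto
    have 1: "(hle ?Y (Inl x) (Inr y) \<longleftrightarrow> hle R x y) \<and> (rle ?Y (Inl x) (Inr y) \<longleftrightarrow> rle R x y)"
      using H u v by fastforce
    have 2: "(hle ?Y (Inr y) (Inl x) \<longleftrightarrow> hle R y x) \<and> (rle ?Y (Inr y) (Inl x) \<longleftrightarrow> rle R y x)"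
      using H u v by fastforce
    show "rle R x y \<and> \<not> hle R x y \<and> \<not> hle R y x \<and> \<not> rle R y x"
      using 1 2 x y by simp
  qed
next
  assume c: "\<forall>x\<in>pcar R - I0. \<forall>y\<in>I0. rle R x y \<and> \<not> hle R x y \<and> \<not> hle R y x \<and> \<not> rle R y x"
  let ?Y = "pprod (psub R (pcar R - I0)) (psub R I0)"
  let ?k = "case_sum id id :: 'a + 'a \<Rightarrow> 'a"
  have inj: "inj_on ?k (pcar ?Y)"
  proof (rule inj_onI)
    fix u v assume u: "u \<in> pcar ?Y" and v: "v \<in> pcar ?Y" and e: "?k u = ?k v"
    show "u = v"
      using u v e by (cases u; cases v) auto
  qed
  have im: "?k ` pcar ?Y = pcar R"
  proof -
    have "?k ` pcar ?Y = ?k ` Inl ` (pcar R - I0) \<union> ?k ` Inr ` I0" by (simp add: image_Un)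
    also have "\<dots> = (pcar R - I0) \<union> I0" by (simp add: image_image)
    also have "\<dots> = pcar R" using I0 by blast
    finally show ?thesis .
  qed
  have B: "bij_betw ?k (pcar ?Y) (pcar R)" unfolding bij_betw_def using inj im by blast
  have O: "\<forall>u\<in>pcar ?Y. \<forall>v\<in>pcar ?Y. (hle ?Y u v \<longleftrightarrow> hle R (?k u) (?k v)) \<and> (rle ?Y u v \<longleftrightarrow> rle R (?k u) (?k v))"
  proof (intro ballI)
    fix u v assume u: "u \<in> pcar ?Y" and v: "v \<in> pcar ?Y"
    show "(hle ?Y u v \<longleftrightarrow> hle R (?k u) (?k v)) \<and> (rle ?Y u v \<longleftrightarrow> rle R (?k u) (?k v))"
    proof (cases u; cases v)
      fix a b assume "u = Inl a" "v = Inl b" then show ?thesis using u v by auto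
    next
      fix a b assume "u = Inr a" "v = Inr b" then show ?thesis using u v by auto
    next
      fix a b assume ab: "u = Inl a" "v = Inr b"
      then have "a \<in> pcar R - I0" "b \<in> I0" using u v by auto
      then show ?thesis using c ab by simp
    next
      fix a b assume ab: "u = Inr a" "v = Inl b"
      then have "b \<in> pcar R - I0" "a \<in> I0" using u v by auto
      then show ?thesis using c ab by simp
    qed
  qed
  show "splits R I0" unfolding splits_def pp_iso_def by (rule conjI[OF B O])
qed

lemma back_lem:
  fixes P :: "'a pp" and Q :: "'b pp" and R :: "'c pp" and X :: "('a + 'b) pp"
  assumes tP: "tot P" and tQ: "tot Q" and tR: "tot R" and I0: "I0 \<subseteq> pcar R"
    and l1: "ple P (psub R (pcar R - I0))" and l2: "ple Q (psub R I0)"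
    and sep0: "\<forall>x\<in>pcar R - I0. \<forall>y\<in>I0. tle R x y"
    and pX: "pcar X = Inl ` pcar P \<union> Inr ` pcar Q" and tX: "tle X = tle (ptri P Q)"
  shows "\<And>u. u \<in> pcar X \<Longrightarrow> theta X R u = case_sum (theta P (psub R (pcar R - I0))) (theta Q (psub R I0)) u"
    and "theta X R ` Inr ` pcar Q = I0"
    and "card (pcar X) = card (pcar R)"
    and "\<And>a. a \<in> pcar P \<Longrightarrow> theta P (psub R (pcar R - I0)) a \<in> pcar R - I0"
    and "\<And>b. b \<in> pcar Q \<Longrightarrow> theta Q (psub R I0) b \<in> I0"
    and "\<And>a b. a \<in> pcar P \<Longrightarrow> b \<in> pcar P \<Longrightarrow> hle R (theta P (psub R (pcar R - I0)) a) (theta P (psub R (pcar R - I0)) b) \<Longrightarrow> hle P a b"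
    and "\<And>a b. a \<in> pcar Q \<Longrightarrow> b \<in> pcar Q \<Longrightarrow> hle R (theta Q (psub R I0) a) (theta Q (psub R I0) b) \<Longrightarrow> hle Q a b"
proof -
  let ?f = "theta P (psub R (pcar R - I0))" and ?h = "theta Q (psub R I0)"
  have sep: "\<And>x y. x \<in> pcar R - I0 \<Longrightarrow> y \<in> I0 \<Longrightarrow> tle R x y" using sep0 by blast
  have "tot X = tot (ptri P Q)" by (rule tot_cong) (simp_all add: pX tX)
  then have totX: "tot X" using tot_ptri[OF tP tQ] by simp
  have iso: "isoT X R (case_sum ?f ?h)" using glue[OF tP tQ tR I0 l1 l2 sep pX tX] .
  show th: "\<And>u. u \<in> pcar X \<Longrightarrow> theta X R u = case_sum ?f ?h u"
    using theta_eqI[OF totX tR iso] by blast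
  show "card (pcar X) = card (pcar R)" using bij_betw_same_card[OF isoT_bij[OF iso]] .
  have tS1: "tot (psub R (pcar R - I0))" using tot_psub[OF tR] by blast
  have tS2: "tot (psub R I0)" using tot_psub[OF tR I0] .
  have c1: "card (pcar P) = card (pcar (psub R (pcar R - I0)))" using l1 unfolding ple_def by blast
  have c2: "card (pcar Q) = card (pcar (psub R I0))" using l2 unfolding ple_def by blast
  have b1: "bij_betw ?f (pcar P) (pcar R - I0)" using isoT_bij[OF theta_iso[OF tP tS1 c1]] by simp
  have b2: "bij_betw ?h (pcar Q) I0" using isoT_bij[OF theta_iso[OF tQ tS2 c2]] by simp
  show "\<And>a. a \<in> pcar P \<Longrightarrow> ?f a \<in> pcar R - I0" using bij_betwE[OF b1] by blast
  show hI: "\<And>b. b \<in> pcar Q \<Longrightarrow> ?h b \<in> I0" using bij_betwE[OF b2] by blast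
  have "theta X R ` Inr ` pcar Q = ?h ` pcar Q"
  proof -
    have "theta X R ` Inr ` pcar Q = case_sum ?f ?h ` Inr ` pcar Q"
      by (rule image_cong[OF refl]) (use th pX in auto)
    then show ?thesis by (simp add: image_image)
  qed
  then show "theta X R ` Inr ` pcar Q = I0" using bij_betw_imp_surj_on[OF b2] by simp
  show "\<And>a b. a \<in> pcar P \<Longrightarrow> b \<in> pcar P \<Longrightarrow> hle R (?f a) (?f b) \<Longrightarrow> hle P a b"
  proof -
    fix a b assume ab: "a \<in> pcar P" "b \<in> pcar P" and hh: "hle R (?f a) (?f b)"
    have "?f a \<in> pcar R - I0" "?f b \<in> pcar R - I0" using bij_betwE[OF b1] ab by blast+
    then have "hle (psub R (pcar R - I0)) (?f a) (?f b)" using hh by simp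
    then show "hle P a b" using l1 ab unfolding ple_def by blast
  qed
  show "\<And>a b. a \<in> pcar Q \<Longrightarrow> b \<in> pcar Q \<Longrightarrow> hle R (?h a) (?h b) \<Longrightarrow> hle Q a b"
  proof -
    fix a b assume ab: "a \<in> pcar Q" "b \<in> pcar Q" and hh: "hle R (?h a) (?h b)"
    have "?h a \<in> I0" "?h b \<in> I0" using bij_betwE[OF b2] ab by blast+
    then have "hle (psub R I0) (?h a) (?h b)" using hh by simp
    then show "hle Q a b" using l2 ab unfolding ple_def by blast
  qed
qed

lemma part1:
  fixes P :: "'a pp" and Q :: "'b pp" and R :: "'c pp"
  assumes pP: "plane_poset P" and pQ: "plane_poset Q" and pR: "plane_poset R"
  shows "(ple (ptri P Q) R \<longleftrightarrow>
        (\<exists>I0. biideal R I0 \<and> ple P (psub R (pcar R - I0)) \<and> ple Q (psub R I0)))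
     \<and> (\<forall>I0. biideal R I0 \<and> ple P (psub R (pcar R - I0)) \<and> ple Q (psub R I0)
           \<longrightarrow> I0 = theta (pprod P Q) R ` (Inr ` pcar Q))"
proof -
  have tP: "tot P" and tQ: "tot Q" and tR: "tot R" using plane_tot pP pQ pR by blast+
  let ?X = "ptri P Q"
  have pX: "pcar ?X = Inl ` pcar P \<union> Inr ` pcar Q" by simp
  have totX: "tot ?X" using tot_ptri[OF tP tQ] .
  have thc: "theta (pprod P Q) R = theta ?X R" by (rule theta_cong1) (simp_all add: tle_pprod_ptri)
  have sepI: "tle R x y" if bi: "biideal R I0" and x: "x \<in> pcar R - I0" and y: "y \<in> I0" for I0 x y
  proof (rule ccontr)
    assume n: "\<not> tle R x y"
    have "y \<in> pcar R" using bi y unfolding biideal_def by blast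
    then have "tle R y x" using tot_total[OF tR] x n by blast
    then have "x \<in> I0" using bi y unfolding biideal_def tle_def by blast
    then show False using x by blast
  qed
  have bk: "ple ?X R \<and> theta ?X R ` Inr ` pcar Q = I0"
    if bi: "biideal R I0" and l1: "ple P (psub R (pcar R - I0))" and l2: "ple Q (psub R I0)" for I0
  proof -
    have I0: "I0 \<subseteq> pcar R" using bi unfolding biideal_def by blast
    let ?f = "theta P (psub R (pcar R - I0))" and ?h = "theta Q (psub R I0)"
    have sep: "\<forall>x\<in>pcar R - I0. \<forall>y\<in>I0. tle R x y" using sepI[OF bi] by blast
    note B = back_lem[OF tP tQ tR I0 l1 l2 sep pX refl]
    have hle: "hle ?X u v" if u: "u \<in> pcar ?X" and v: "v \<in> pcar ?X" and hh: "hle R (theta ?X R u) (theta ?X R v)" for u v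
    proof -
      have hh': "hle R (case_sum ?f ?h u) (case_sum ?f ?h v)" using hh B(1)[OF u] B(1)[OF v] by simp
      show ?thesis
      proof (cases u; cases v)
        fix a b assume ab: "u = Inl a" "v = Inl b"
        then show ?thesis using B(6)[of a b] u v hh' by auto
      next
        fix a b assume ab: "u = Inr a" "v = Inr b"
        then show ?thesis using B(7)[of a b] u v hh' by auto
      next
        fix a b assume ab: "u = Inl a" "v = Inr b"
        then show ?thesis using u v by auto
      next
        fix a b assume ab: "u = Inr a" "v = Inl b"
        then have a: "a \<in> pcar Q" and b: "b \<in> pcar P" using u v by auto
        have "?h a \<in> I0" using B(5)[OF a] .
        moreover have "hle R (?h a) (?f b)" using hh' ab by simp
        ultimately have "?f b \<in> I0" using bi unfolding biideal_def by blast
        then show ?thesis using B(4)[OF b] by blast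
      qed
    qed
    have "ple ?X R" unfolding ple_def using B(3) hle by blast
    then show ?thesis using B(2) by blast
  qed
  have fwd: "\<exists>I0. biideal R I0 \<and> ple P (psub R (pcar R - I0)) \<and> ple Q (psub R I0)" if le: "ple ?X R"
  proof -
    note W = fw[OF tP tQ tR pX refl hle_ptri(1) hle_ptri(2) le]
    let ?I = "theta ?X R ` Inr ` pcar Q"
    have "biideal R ?I" unfolding biideal_def
    proof (intro conjI ballI allI impI)
      show "?I \<subseteq> pcar R" using W(3) by simp
    next
      fix x y assume x: "x \<in> ?I" and hr: "hle R x y \<or> rle R x y"
      then have t: "tle R x y" unfolding tle_def by blast
      then have yR: "y \<in> pcar R" using tot_mem2[OF tR] by blast
      obtain b where b: "b \<in> pcar Q" "x = theta ?X R (Inr b)" using x by blast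
      obtain v where v: "v \<in> pcar ?X" "y = theta ?X R v"
        using yR bij_betw_imp_surj_on[OF isoT_bij[OF W(1)]] by blast
      have "Inr b \<in> pcar ?X" using b by simp
      then have "tle ?X (Inr b) v" using isoT_refl[OF totX tR W(1) _ v(1)] t b v by simp
      then obtain c where "v = Inr c" by (cases v) auto
      then show "y \<in> ?I" using v by auto
    qed
    then show ?thesis using W(4) W(5) by blast
  qed
  show ?thesis
  proof (intro conjI allI impI iffI)
    assume "ple ?X R" then show "\<exists>I0. biideal R I0 \<and> ple P (psub R (pcar R - I0)) \<and> ple Q (psub R I0)" using fwd by blast
  next
    assume "\<exists>I0. biideal R I0 \<and> ple P (psub R (pcar R - I0)) \<and> ple Q (psub R I0)"
    then show "ple ?X R" using bk by blast
  next
    fix I0 assume "biideal R I0 \<and> ple P (psub R (pcar R - I0)) \<and> ple Q (psub R I0)"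
    then show "I0 = theta (pprod P Q) R ` Inr ` pcar Q" using bk thc by metis
  qed
qed

lemma part2:
  fixes P :: "'a pp" and Q :: "'b pp" and R :: "'c pp"
  assumes pP: "plane_poset P" and pQ: "plane_poset Q" and pR: "plane_poset R"
  shows "(ple (pprod P Q) R \<longleftrightarrow>
        (\<exists>I0. I0 \<subseteq> pcar R \<and> splits R I0 \<and> ple P (psub R (pcar R - I0)) \<and> ple Q (psub R I0)))
     \<and> (\<forall>I0. I0 \<subseteq> pcar R \<and> splits R I0 \<and> ple P (psub R (pcar R - I0)) \<and> ple Q (psub R I0)
           \<longrightarrow> I0 = theta (ptri P Q) R ` (Inr ` pcar Q))"
proof -
  have tP: "tot P" and tQ: "tot Q" and tR: "tot R" using plane_tot pP pQ pR by blast+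
  let ?X = "pprod P Q"
  have pX: "pcar ?X = Inl ` pcar P \<union> Inr ` pcar Q" by simp
  have tX: "tle ?X = tle (ptri P Q)" by (rule tle_pprod_ptri)
  have totX: "tot ?X" using tot_pprod[OF tP tQ] .
  have thc: "theta (ptri P Q) R = theta ?X R" by (rule theta_cong1) (simp_all add: tle_pprod_ptri)
  have bk: "ple ?X R \<and> theta ?X R ` Inr ` pcar Q = I0"
    if I0: "I0 \<subseteq> pcar R" and sp: "splits R I0" and l1: "ple P (psub R (pcar R - I0))" and l2: "ple Q (psub R I0)" for I0
  proof -
    have C: "\<forall>x\<in>pcar R - I0. \<forall>y\<in>I0. rle R x y \<and> \<not> hle R x y \<and> \<not> hle R y x \<and> \<not> rle R y x"
      using splits_iff[OF I0] sp by blast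
    have sep: "\<forall>x\<in>pcar R - I0. \<forall>y\<in>I0. tle R x y" using C unfolding tle_def by blast
    let ?f = "theta P (psub R (pcar R - I0))" and ?h = "theta Q (psub R I0)"
    note B = back_lem[OF tP tQ tR I0 l1 l2 sep pX tX]
    have hle: "hle ?X u v" if u: "u \<in> pcar ?X" and v: "v \<in> pcar ?X" and hh: "hle R (theta ?X R u) (theta ?X R v)" for u v
    proof -
      have hh': "hle R (case_sum ?f ?h u) (case_sum ?f ?h v)" using hh B(1)[OF u] B(1)[OF v] by simp
      show ?thesis
      proof (cases u; cases v)
        fix a b assume ab: "u = Inl a" "v = Inl b"
        then show ?thesis using B(6)[of a b] u v hh' by auto
      next
        fix a b assume ab: "u = Inr a" "v = Inr b"
        then show ?thesis using B(7)[of a b] u v hh' by auto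
      next
        fix a b assume ab: "u = Inl a" "v = Inr b"
        then have a: "a \<in> pcar P" and b: "b \<in> pcar Q" using u v by auto
        have "hle R (?f a) (?h b)" using hh' ab by simp
        then show ?thesis using C B(4)[OF a] B(5)[OF b] by blast
      next
        fix a b assume ab: "u = Inr a" "v = Inl b"
        then have a: "a \<in> pcar Q" and b: "b \<in> pcar P" using u v by auto
        have "hle R (?h a) (?f b)" using hh' ab by simp
        then show ?thesis using C B(4)[OF b] B(5)[OF a] by blast
      qed
    qed
    have "ple ?X R" unfolding ple_def using B(3) hle by blast
    then show ?thesis using B(2) by blast
  qed
  have fwd: "\<exists>I0. I0 \<subseteq> pcar R \<and> splits R I0 \<and> ple P (psub R (pcar R - I0)) \<and> ple Q (psub R I0)" if le: "ple ?X R"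
  proof -
    note W = fw[OF tP tQ tR pX tX hle_pprod(1) hle_pprod(2) le]
    let ?t = "theta ?X R"
    let ?I = "?t ` Inr ` pcar Q"
    have HR: "hle ?X u v" if "u \<in> pcar ?X" "v \<in> pcar ?X" "hle R (?t u) (?t v)" for u v
      using le that unfolding ple_def by blast
    have "\<forall>x\<in>pcar R - ?I. \<forall>y\<in>?I. rle R x y \<and> \<not> hle R x y \<and> \<not> hle R y x \<and> \<not> rle R y x"
    proof (intro ballI)
      fix x y assume x: "x \<in> pcar R - ?I" and y: "y \<in> ?I"
      have "x \<in> ?t ` Inl ` pcar P" using x W(2) by simp
      then obtain a where a: "a \<in> pcar P" "x = ?t (Inl a)" by blast
      obtain b where b: "b \<in> pcar Q" "y = ?t (Inr b)" using y by blast
      have ia: "Inl a \<in> pcar ?X" and ib: "Inr b \<in> pcar ?X" using a b by simp_all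
      have n1: "\<not> hle R x y" using HR[OF ia ib] a b by auto
      have n2: "\<not> hle R y x" using HR[OF ib ia] a b by auto
      have n3: "\<not> rle R y x"
      proof
        assume "rle R y x" then have "tle R (?t (Inr b)) (?t (Inl a))" using a b unfolding tle_def by simp
        then have "tle ?X (Inr b) (Inl a)" using isoT_refl[OF totX tR W(1) ib ia] by simp
        then show False using tX by simp
      qed
      have "tle ?X (Inl a) (Inr b)" using tX a b by simp
      then have "tle R x y" using isoT_mono[OF W(1) ia ib] a b by simp
      then have "rle R x y" using n1 unfolding tle_def by blast
      then show "rle R x y \<and> \<not> hle R x y \<and> \<not> hle R y x \<and> \<not> rle R y x" using n1 n2 n3 by blast
    qed
    then have "splits R ?I" using splits_iff[OF W(3)] by blast
    then show ?thesis using W(3) W(4) W(5) by (intro exI[of _ ?I] conjI)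
  qed
  show ?thesis
  proof (intro conjI allI impI iffI)
    assume "ple ?X R" then show "\<exists>I0. I0 \<subseteq> pcar R \<and> splits R I0 \<and> ple P (psub R (pcar R - I0)) \<and> ple Q (psub R I0)" using fwd by blast
  next
    assume "\<exists>I0. I0 \<subseteq> pcar R \<and> splits R I0 \<and> ple P (psub R (pcar R - I0)) \<and> ple Q (psub R I0)"
    then show "ple ?X R" using bk by blast
  next
    fix I0 assume "I0 \<subseteq> pcar R \<and> splits R I0 \<and> ple P (psub R (pcar R - I0)) \<and> ple Q (psub R I0)"
    then show "I0 = theta (ptri P Q) R ` Inr ` pcar Q" using bk thc by metis
  qed
qed

theorem lemma22:
  fixes P :: "'a pp" and Q :: "'b pp" and R :: "'c pp"
  assumes "plane_poset P" and "plane_poset Q" and "plane_poset R"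
  shows
   "((ple (ptri P Q) R \<longleftrightarrow>
        (\<exists>I0. biideal R I0 \<and> ple P (psub R (pcar R - I0)) \<and> ple Q (psub R I0)))
     \<and> (\<forall>I0. biideal R I0 \<and> ple P (psub R (pcar R - I0)) \<and> ple Q (psub R I0)
           \<longrightarrow> I0 = theta (pprod P Q) R ` (Inr ` pcar Q)))
  \<and> ((ple (pprod P Q) R \<longleftrightarrow>
        (\<exists>I0. I0 \<subseteq> pcar R \<and> splits R I0 \<and> ple P (psub R (pcar R - I0)) \<and> ple Q (psub R I0)))
     \<and> (\<forall>I0. I0 \<subseteq> pcar R \<and> splits R I0 \<and> ple P (psub R (pcar R - I0)) \<and> ple Q (psub R I0)
           \<longrightarrow> I0 = theta (ptri P Q) R ` (Inr ` pcar Q)))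
  \<and> ((ple (iota (pprod P Q)) R \<longleftrightarrow>
        (\<exists>I0. biideal R I0 \<and> ple (iota (psub R (pcar R - I0))) P \<and> ple (iota (psub R I0)) Q))
     \<and> (\<forall>I0. biideal R I0 \<and> ple (iota (psub R (pcar R - I0))) P \<and> ple (iota (psub R I0)) Q
           \<longrightarrow> I0 = theta (pprod P Q) R ` (Inr ` pcar Q)))
  \<and> ((ple (iota (ptri P Q)) R \<longleftrightarrow>
        (\<exists>I0. I0 \<subseteq> pcar R \<and> splits R I0 \<and> ple (iota (psub R (pcar R - I0))) P \<and> ple (iota (psub R I0)) Q))
     \<and> (\<forall>I0. I0 \<subseteq> pcar R \<and> splits R I0 \<and> ple (iota (psub R (pcar R - I0))) P \<and> ple (iota (psub R I0)) Q
           \<longrightarrow> I0 = theta (ptri P Q) R ` (Inr ` pcar Q)))"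
proof -
  note pP = assms(1) and pQ = assms(2) and pR = assms(3)
  have iP: "plane_poset (iota P)" using plane_iota[OF pP] .
  have iQ: "plane_poset (iota Q)" using plane_iota[OF pQ] .
  have sw: "(ple (iota P) (psub R (pcar R - I0)) \<longleftrightarrow> ple (iota (psub R (pcar R - I0))) P)
          \<and> (ple (iota Q) (psub R I0) \<longleftrightarrow> ple (iota (psub R I0)) Q)" if I0: "I0 \<subseteq> pcar R" for I0
  proof -
    have s1: "plane_poset (psub R (pcar R - I0))" using plane_psub[OF pR] by blast
    have s2: "plane_poset (psub R I0)" using plane_psub[OF pR I0] .
    show ?thesis using iota_swap_iff[OF pP s1] iota_swap_iff[OF pQ s2] by blast
  qed
  have bsub: "I0 \<subseteq> pcar R" if "biideal R I0" for I0 using that unfolding biideal_def by blast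
  have tc3: "theta (pprod (iota P) (iota Q)) R = theta (pprod P Q) R"
  proof (rule theta_cong1)
    show "pcar (pprod (iota P) (iota Q)) = pcar (pprod P Q)" by simp
    have "tle (pprod (iota P) (iota Q)) = tle (ptri (iota P) (iota Q))" by (rule tle_pprod_ptri)
    also have "\<dots> = tle (iota (pprod P Q))" by (simp only: iota_pprod)
    also have "\<dots> = tle (pprod P Q)" by (rule tle_iota)
    finally show "tle (pprod (iota P) (iota Q)) = tle (pprod P Q)" .
  qed
  have tc4: "theta (ptri (iota P) (iota Q)) R = theta (ptri P Q) R"
  proof (rule theta_cong1)
    show "pcar (ptri (iota P) (iota Q)) = pcar (ptri P Q)" by simp
    have "tle (ptri (iota P) (iota Q)) = tle (iota (pprod P Q))" by (simp only: iota_pprod)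
    also have "\<dots> = tle (pprod P Q)" by (rule tle_iota)
    also have "\<dots> = tle (ptri P Q)" by (rule tle_pprod_ptri)
    finally show "tle (ptri (iota P) (iota Q)) = tle (ptri P Q)" .
  qed
  note A = part1[OF iP iQ pR]
  have A1: "ple (iota (pprod P Q)) R \<longleftrightarrow> (\<exists>I0. biideal R I0 \<and> ple (iota P) (psub R (pcar R - I0)) \<and> ple (iota Q) (psub R I0))"
    using conjunct1[OF A] by (simp only: iota_pprod)
  have A2: "\<forall>I0. biideal R I0 \<and> ple (iota P) (psub R (pcar R - I0)) \<and> ple (iota Q) (psub R I0) \<longrightarrow> I0 = theta (pprod P Q) R ` Inr ` pcar Q"
    using conjunct2[OF A] by (simp only: tc3 pcar_iota)
  have C3: "(ple (iota (pprod P Q)) R \<longleftrightarrow>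
        (\<exists>I0. biideal R I0 \<and> ple (iota (psub R (pcar R - I0))) P \<and> ple (iota (psub R I0)) Q))
     \<and> (\<forall>I0. biideal R I0 \<and> ple (iota (psub R (pcar R - I0))) P \<and> ple (iota (psub R I0)) Q
           \<longrightarrow> I0 = theta (pprod P Q) R ` (Inr ` pcar Q))"
  proof (intro conjI allI impI)
    show "ple (iota (pprod P Q)) R \<longleftrightarrow> (\<exists>I0. biideal R I0 \<and> ple (iota (psub R (pcar R - I0))) P \<and> ple (iota (psub R I0)) Q)"
    proof
      assume "ple (iota (pprod P Q)) R"
      then obtain I0 where h: "biideal R I0" "ple (iota P) (psub R (pcar R - I0))" "ple (iota Q) (psub R I0)" using A1 by blast
      then have "ple (iota (psub R (pcar R - I0))) P" "ple (iota (psub R I0)) Q" using sw[OF bsub[OF h(1)]] by blast+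
      then show "\<exists>I0. biideal R I0 \<and> ple (iota (psub R (pcar R - I0))) P \<and> ple (iota (psub R I0)) Q" using h(1) by blast
    next
      assume "\<exists>I0. biideal R I0 \<and> ple (iota (psub R (pcar R - I0))) P \<and> ple (iota (psub R I0)) Q"
      then obtain I0 where h: "biideal R I0" "ple (iota (psub R (pcar R - I0))) P" "ple (iota (psub R I0)) Q" by blast
      then have "ple (iota P) (psub R (pcar R - I0))" "ple (iota Q) (psub R I0)" using sw[OF bsub[OF h(1)]] by blast+
      then show "ple (iota (pprod P Q)) R" using A1 h(1) by blast
    qed
  next
    fix I0 assume h: "biideal R I0 \<and> ple (iota (psub R (pcar R - I0))) P \<and> ple (iota (psub R I0)) Q"
    then have "ple (iota P) (psub R (pcar R - I0))" "ple (iota Q) (psub R I0)" using sw[OF bsub] by blast+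
    then show "I0 = theta (pprod P Q) R ` Inr ` pcar Q" using A2 h by blast
  qed
  note B = part2[OF iP iQ pR]
  have B1: "ple (iota (ptri P Q)) R \<longleftrightarrow> (\<exists>I0. I0 \<subseteq> pcar R \<and> splits R I0 \<and> ple (iota P) (psub R (pcar R - I0)) \<and> ple (iota Q) (psub R I0))"
    using conjunct1[OF B] by (simp only: iota_ptri)
  have B2: "\<forall>I0. I0 \<subseteq> pcar R \<and> splits R I0 \<and> ple (iota P) (psub R (pcar R - I0)) \<and> ple (iota Q) (psub R I0) \<longrightarrow> I0 = theta (ptri P Q) R ` Inr ` pcar Q"
    using conjunct2[OF B] by (simp only: tc4 pcar_iota)
  have C4: "(ple (iota (ptri P Q)) R \<longleftrightarrow>
        (\<exists>I0. I0 \<subseteq> pcar R \<and> splits R I0 \<and> ple (iota (psub R (pcar R - I0))) P \<and> ple (iota (psub R I0)) Q))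
     \<and> (\<forall>I0. I0 \<subseteq> pcar R \<and> splits R I0 \<and> ple (iota (psub R (pcar R - I0))) P \<and> ple (iota (psub R I0)) Q
           \<longrightarrow> I0 = theta (ptri P Q) R ` (Inr ` pcar Q))"
  proof (intro conjI allI impI)
    show "ple (iota (ptri P Q)) R \<longleftrightarrow> (\<exists>I0. I0 \<subseteq> pcar R \<and> splits R I0 \<and> ple (iota (psub R (pcar R - I0))) P \<and> ple (iota (psub R I0)) Q)"
    proof
      assume "ple (iota (ptri P Q)) R"
      then obtain I0 where h: "I0 \<subseteq> pcar R" "splits R I0" "ple (iota P) (psub R (pcar R - I0))" "ple (iota Q) (psub R I0)" using B1 by blast
      then have "ple (iota (psub R (pcar R - I0))) P" "ple (iota (psub R I0)) Q" using sw[OF h(1)] by blast+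
      then show "\<exists>I0. I0 \<subseteq> pcar R \<and> splits R I0 \<and> ple (iota (psub R (pcar R - I0))) P \<and> ple (iota (psub R I0)) Q" using h(1,2) by blast
    next
      assume "\<exists>I0. I0 \<subseteq> pcar R \<and> splits R I0 \<and> ple (iota (psub R (pcar R - I0))) P \<and> ple (iota (psub R I0)) Q"
      then obtain I0 where h: "I0 \<subseteq> pcar R" "splits R I0" "ple (iota (psub R (pcar R - I0))) P" "ple (iota (psub R I0)) Q" by blast
      then have "ple (iota P) (psub R (pcar R - I0))" "ple (iota Q) (psub R I0)" using sw[OF h(1)] by blast+
      then show "ple (iota (ptri P Q)) R" using B1 h(1,2) by blast
    qed
  next
    fix I0 assume h: "I0 \<subseteq> pcar R \<and> splits R I0 \<and> ple (iota (psub R (pcar R - I0))) P \<and> ple (iota (psub R I0)) Q"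
    then have "ple (iota P) (psub R (pcar R - I0))" "ple (iota Q) (psub R I0)" using sw by blast+
    then show "I0 = theta (ptri P Q) R ` Inr ` pcar Q" using B2 h by blast
  qed
  show ?thesis by (rule conjI[OF part1[OF pP pQ pR] conjI[OF part2[OF pP pQ pR] conjI[OF C3 C4]]])
qed

end
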